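(* Let $r,n,s_1,\ldots,s_r\in\mathbb{N}$ (positive integers) with $r\leq n$. If $n\geq 2$, then $$\overline{H}_n^{\star}(s_1,\ldots,s_r)=\sum_{0\leq k_1\leq k_2\leq\cdots\leq k_r\leq n-1}\prod_{j=1}^{r}\frac{1}{(2k_j+1)^{s_j}}$$ is not an integer.
   Context: $\mathbb{N}$ denotes the set of positive integers. $\overline{H}_n^{\star}(s_1,\ldots,s_r)$ is called the odd multiple harmonic star sum. *)

theory Defs
  imports Complex_Main
begin

definition odd_mhs_star :: "nat \<Rightarrow> nat list \<Rightarrow> rat" where
  "odd_mhs_star n s =
     (\<Sum>k \<in> {k :: nat list. length k = length s \<and> sorted k \<and> (\<forall>i \<in> set k. i < n)}.
        \<Prod>j < length s. 1 / (of_nat (2 * k ! j + 1)) ^ (s ! j))"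

end

theory Submission
  imports Defs "HOL-Computational_Algebra.Primes"
begin

definition R3 :: "rat \<Rightarrow> bool" where
  "R3 x \<longleftrightarrow> (\<exists>a b::int. b \<noteq> 0 \<and> \<not> 3 dvd b \<and> x = of_int a / of_int b)"

lemma three_dvd_mult: "(3::int) dvd b * d \<Longrightarrow> 3 dvd b \<or> 3 dvd d"
proof -
  have "prime (3::int)" by simp
  thus "(3::int) dvd b * d \<Longrightarrow> 3 dvd b \<or> 3 dvd d" using prime_dvd_mult_iff by blast
qed

lemma R3_int: "R3 (of_int z)"
  unfolding R3_def by (rule exI[of _ z], rule exI[of _ 1]) simp

lemma R3_mult: "R3 x \<Longrightarrow> R3 y \<Longrightarrow> R3 (x * y)"
  unfolding R3_def
proof (elim exE conjE)
  fix a b c d :: int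
  assume h: "b \<noteq> 0" "\<not> 3 dvd b" "x = of_int a / of_int b" "d \<noteq> 0" "\<not> 3 dvd d" "y = of_int c / of_int d"
  show "\<exists>a b::int. b \<noteq> 0 \<and> \<not> 3 dvd b \<and> x * y = of_int a / of_int b"
  proof (rule exI[of _ "a*c"], rule exI[of _ "b*d"])
    have e: "x * y = of_int (a*c) / of_int (b*d)" using h by simp
    have "\<not> 3 dvd b * d" using h three_dvd_mult[of b d] by blast
    thus "b * d \<noteq> 0 \<and> \<not> 3 dvd b * d \<and> x * y = of_int (a*c) / of_int (b*d)" using e h by simp
  qed
qed

lemma R3_add: "R3 x \<Longrightarrow> R3 y \<Longrightarrow> R3 (x + y)"
  unfolding R3_def
proof (elim exE conjE)
  fix a b c d :: int
  assume h: "b \<noteq> 0" "\<not> 3 dvd b" "x = of_int a / of_int b" "d \<noteq> 0" "\<not> 3 dvd d" "y = of_int c / of_int d"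
  show "\<exists>a b::int. b \<noteq> 0 \<and> \<not> 3 dvd b \<and> x + y = of_int a / of_int b"
  proof (rule exI[of _ "a*d + c*b"], rule exI[of _ "b*d"])
    have e: "x + y = of_int (a*d+c*b) / of_int (b*d)" using h by (simp add: field_simps)
    have "\<not> 3 dvd b * d" using h three_dvd_mult[of b d] by blast
    thus "b * d \<noteq> 0 \<and> \<not> 3 dvd b * d \<and> x + y = of_int (a*d+c*b) / of_int (b*d)" using e h by simp
  qed
qed

lemma R3_neg: "R3 x \<Longrightarrow> R3 (- x)"
  unfolding R3_def
proof (elim exE conjE)
  fix a b :: int
  assume h: "b \<noteq> 0" "\<not> 3 dvd b" "x = of_int a / of_int b"
  show "\<exists>a b::int. b \<noteq> 0 \<and> \<not> 3 dvd b \<and> - x = of_int a / of_int b"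
    apply (rule exI[of _ "-a"], rule exI[of _ "b"])
    using h by simp
qed

lemma R3_diff: "R3 x \<Longrightarrow> R3 y \<Longrightarrow> R3 (x - y)"
  using R3_add[OF _ R3_neg] by (metis diff_conv_add_uminus)

lemma R3_power: "R3 x \<Longrightarrow> R3 (x ^ k)"
  by (induction k) (auto intro: R3_mult simp: R3_int[of 1, simplified])

lemma R3_sum: "(\<And>x. x \<in> A \<Longrightarrow> R3 (f x)) \<Longrightarrow> R3 (sum f A)"
proof (cases "finite A")
  case True
  assume "\<And>x. x \<in> A \<Longrightarrow> R3 (f x)"
  with True show ?thesis
    by (induction A rule: finite_induct) (auto intro: R3_add simp: R3_int[of 0, simplified])
qed (simp add: R3_int[of 0, simplified])

lemma R3_prod: "(\<And>x. x \<in> A \<Longrightarrow> R3 (f x)) \<Longrightarrow> R3 (prod f A)"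
proof (cases "finite A")
  case True
  assume "\<And>x. x \<in> A \<Longrightarrow> R3 (f x)"
  with True show ?thesis
    by (induction A rule: finite_induct) (auto intro: R3_mult simp: R3_int[of 1, simplified])
qed (simp add: R3_int[of 1, simplified])

lemma not_R3_third: "\<not> R3 (1/3)"
proof
  assume "R3 (1/3)"
  then obtain a b :: int where h: "b \<noteq> 0" "\<not> 3 dvd b" "(1/3::rat) = of_int a / of_int b"
    unfolding R3_def by blast
  hence "of_int b = (3 * of_int a :: rat)" by (simp add: field_simps)
  hence "b = 3 * a" by (metis of_int_eq_iff of_int_mult of_int_numeral)
  with h show False by simp
qed

lemma decomp3: "(m::nat) > 0 \<Longrightarrow> \<exists>v u. m = 3^v * u \<and> \<not> 3 dvd u"
proof (induction m rule: less_induct)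
  case (less m)
  show ?case
  proof (cases "3 dvd m")
    case True
    then obtain m' where m': "m = 3 * m'" by blast
    with less.prems have "m' < m" "m' > 0" by auto
    with less.IH obtain v u where "m' = 3^v * u" "\<not> 3 dvd u" by blast
    with m' show ?thesis by (intro exI[of _ "Suc v"] exI[of _ u]) simp
  next
    case False
    then show ?thesis by (intro exI[of _ 0] exI[of _ m]) simp
  qed
qed

lemma exists_a: "(N::nat) \<ge> 1 \<Longrightarrow> \<exists>a. 3^a \<le> N \<and> N < 3^(a+1)"
proof -
  assume N: "N \<ge> 1"
  have ex: "\<exists>b. N < 3^b" 
  proof -
    have "N < 2^N" by (rule less_exp)
    also have "(2::nat)^N \<le> 3^N" by (rule power_mono) auto
    finally show ?thesis by blast
  qed
  define b where "b = (LEAST b. N < (3::nat)^b)"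
  have hb: "N < 3^b" unfolding b_def by (rule LeastI_ex[OF ex])
  have "b \<noteq> 0"
  proof
    assume "b = 0" with hb N show False by simp
  qed
  then obtain a where a: "b = Suc a" by (cases b) auto
  have "\<not> N < 3^a" using not_less_Least[of a "\<lambda>b. N < (3::nat)^b"] a unfolding b_def by simp
  with hb a show ?thesis by (intro exI[of _ a]) auto
qed

lemma lemA:
  fixes m a N :: nat
  assumes m: "m = 2*c'+1" "m \<le> N" and a: "N < 3^(a+1)"
  shows "R3 ((3::rat)^a / of_nat m) \<and> (m \<noteq> 3^a \<longrightarrow> R3 ((3::rat)^a / of_nat m / 3))"
proof -
  obtain v u where vu: "m = 3^v * u" "\<not> 3 dvd u" using decomp3[of m] m by auto
  have u0: "u > 0" using vu m by (cases u) auto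
  have "3^v \<le> m" using vu u0 by simp
  hence "(3::nat)^v < 3^(a+1)" using m a by linarith
  hence va: "v \<le> a" using power_less_imp_less_exp[of "3::nat" v "a+1"] by simp
  have "odd m" using m by simp
  hence oddu: "odd u" using vu by simp
  have vlt: "v < a" if "m \<noteq> 3^a"
  proof (rule ccontr)
    assume "\<not> v < a"
    hence "v = a" using va by simp
    hence "u \<noteq> 1" using that vu by simp
    with oddu vu(2) have "u \<ge> 3"
      by (metis One_nat_def dvd_refl even_numeral le_simps(3) less_2_cases_iff linorder_neqE_nat nat_less_le numeral_2_eq_2 numeral_3_eq_3 odd_pos)
    hence "3^v * 3 \<le> m" using vu by simp
    with \<open>v = a\<close> m a show False by simp
  qed
  have e1: "(3::rat)^a / of_nat m = of_int (3^(a-v)) / of_int (int u)"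
  proof -
    have "(3::rat)^a = 3^(a-v) * 3^v" using va by (simp add: power_add[symmetric])
    thus ?thesis using vu u0 by simp
  qed
  have r1: "R3 ((3::rat)^a / of_nat m)" unfolding e1 R3_def 
    apply (rule exI[of _ "(3::int)^(a-v)"], rule exI[of _ "int u"]) using u0 vu(2) by auto (metis int_dvd_int_iff of_nat_numeral)
  have r2: "R3 ((3::rat)^a / of_nat m / 3)" if "m \<noteq> 3^a"
  proof -
    have "a = Suc ((a-v-1) + v)" using vlt[OF that] by simp
    hence "(3::rat)^a = 3^(a-v-1) * 3^v * 3"
      by (metis power_Suc2 power_add)
    hence e2: "(3::rat)^a / of_nat m / 3 = of_int (3^(a-v-1)) / of_int (int u)" using vu u0 by simp
    show ?thesis unfolding e2 R3_def 
      apply (rule exI[of _ "(3::int)^(a-v-1)"], rule exI[of _ "int u"]) using u0 vu(2) by auto (metis int_dvd_int_iff of_nat_numeral)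
  qed
  show ?thesis using r1 r2 by blast
qed

theorem theorem1p1:
  fixes n :: nat and s :: "nat list"
  assumes "1 \<le> length s" and "length s \<le> n" and "\<forall>j \<in> set s. 1 \<le> j"
    and "2 \<le> n"
  shows "odd_mhs_star n s \<notin> \<int>"
proof
  assume zI: "odd_mhs_star n s \<in> \<int>"
  then obtain z where z: "odd_mhs_star n s = of_int z" by (auto elim: Ints_cases)
  define r where "r = length s"
  define N where "N = 2*n-1"
  have N3: "N \<ge> 3" using assms(4) unfolding N_def by simp
  obtain a where a: "3^a \<le> N" "N < 3^(a+1)" using exists_a[of N] N3 by auto
  have a1: "a \<ge> 1"
  proof (rule ccontr)
    assume "\<not> a \<ge> 1" hence "a = 0" by simp
    with a N3 show False by simp
  qed
  have odd3: "odd ((3::nat)^a)" by simp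
  define c :: nat where "c = 3^a div 2"
  have c: "2*c+1 = 3^a" unfolding c_def using odd3 by (rule odd_two_times_div_two_succ)
  have cn: "c < n" using c a(1) unfolding N_def by linarith
  define S where "S = (\<Sum>j<r. s!j)"
  have sj: "\<And>j. j < r \<Longrightarrow> s!j \<ge> 1" using assms(3) unfolding r_def by auto
  have S1: "S \<ge> 1"
  proof -
    have "s!0 \<le> S" unfolding S_def using assms(1) r_def
      by (intro member_le_sum) auto
    moreover have "0 < r" using assms(1) unfolding r_def by linarith
    hence "s!0 \<ge> 1" by (rule sj)
    ultimately show ?thesis by linarith
  qed
  define K where "K = {k :: nat list. length k = length s \<and> sorted k \<and> (\<forall>i \<in> set k. i < n)}"
  define T where "T k = (\<Prod>j < length s. 1 / (of_nat (2 * k ! j + 1) :: rat) ^ (s ! j))" for k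
  have osum: "odd_mhs_star n s = sum T K" unfolding odd_mhs_star_def K_def T_def by simp
  have fin: "finite K"
  proof (rule finite_subset)
    show "K \<subseteq> {k. set k \<subseteq> {..<n} \<and> length k = length s}" unfolding K_def by auto
    show "finite {k. set k \<subseteq> {..<n} \<and> length k = length s}"
      by (rule finite_lists_length_eq) simp
  qed
  define k0 where "k0 = replicate r c"
  have k0K: "k0 \<in> K" unfolding K_def k0_def r_def using cn by (auto simp: sorted_replicate)
  have pw: "(3::rat)^(a*S) = (\<Prod>j<r. (3^a)^(s!j))"
    unfolding S_def by (simp add: power_mult power_sum)
  have Tk0: "(3::rat)^(a*S) * T k0 = 1"
  proof -
    have "(3::rat)^(a*S) * T k0 = (\<Prod>j<r. (3^a)^(s!j) * (1 / (of_nat (2 * k0 ! j + 1)) ^ (s ! j)))"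
      unfolding pw T_def r_def by (rule prod.distrib[symmetric])
    also have "\<dots> = (\<Prod>j<r. (1::rat))"
    proof (rule prod.cong)
      fix j assume "j \<in> {..<r}"
      hence "k0 ! j = c" unfolding k0_def by simp
      hence "(of_nat (2 * k0 ! j + 1) :: rat) = 3^a" using c by (metis of_nat_numeral of_nat_power)
      thus "((3::rat)^a)^(s!j) * (1 / (of_nat (2 * k0 ! j + 1)) ^ (s ! j)) = 1" by simp
    qed simp
    finally show ?thesis by simp
  qed
  have rest: "R3 ((3::rat)^(a*S) * T k / 3)" if kK: "k \<in> K" and kne: "k \<noteq> k0" for k
  proof -
    define g where "g j = ((3::rat)^a / of_nat (2 * k ! j + 1)) ^ (s ! j)" for j
    have gprod: "(3::rat)^(a*S) * T k = (\<Prod>j<r. g j)"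
    proof -
      have "(3::rat)^(a*S) * T k = (\<Prod>j<r. (3^a)^(s!j) * (1 / (of_nat (2 * k ! j + 1)) ^ (s ! j)))"
        unfolding pw T_def r_def by (rule prod.distrib[symmetric])
      also have "\<dots> = (\<Prod>j<r. g j)"
        by (rule prod.cong) (simp_all add: g_def power_divide)
      finally show ?thesis .
    qed
    have lk: "length k = r" using kK unfolding K_def r_def by simp
    obtain j where j: "j < r" "k!j \<noteq> c"
    proof (rule ccontr)
      assume "\<not> thesis"
      hence "\<forall>j<r. k!j = c" using that by blast
      hence "k = k0" unfolding k0_def using lk by (intro nth_equalityI) auto
      with kne show False by simp
    qed
    have kjn: "k!j < n" using kK j lk unfolding K_def by auto
    have mle: "2 * k ! j + 1 \<le> N" using kjn unfolding N_def by simp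
    have mne: "2 * k ! j + 1 \<noteq> 3^a" using j c by simp
    have A: "\<And>i. i < r \<Longrightarrow> R3 ((3::rat)^a / of_nat (2 * k ! i + 1))"
    proof -
      fix i assume "i < r"
      hence "k!i < n" using kK lk unfolding K_def by auto
      hence "2 * k ! i + 1 \<le> N" unfolding N_def by simp
      thus "R3 ((3::rat)^a / of_nat (2 * k ! i + 1))" using lemA[OF refl _ a(2)] by blast
    qed
    have Aj: "R3 ((3::rat)^a / of_nat (2 * k ! j + 1) / 3)" using lemA[OF refl mle a(2)] mne by blast
    have "(\<Prod>j<r. g j) = g j * (\<Prod>i\<in>{..<r} - {j}. g i)"
      using j by (simp add: prod.remove)
    hence f1: "(3::rat)^(a*S) * T k / 3 = (g j / 3) * (\<Prod>i\<in>{..<r} - {j}. g i)"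
      using gprod by simp
    moreover have "g j / 3 = ((3::rat)^a / of_nat (2 * k ! j + 1) / 3) * ((3::rat)^a / of_nat (2 * k ! j + 1)) ^ (s!j - 1)"
    proof -
      have "s!j = Suc (s!j - 1)" using sj[OF j(1)] by simp
      hence "g j = ((3::rat)^a / of_nat (2 * k ! j + 1)) * ((3::rat)^a / of_nat (2 * k ! j + 1)) ^ (s!j - 1)"
        unfolding g_def by (metis power_Suc)
      thus ?thesis by simp
    qed
    moreover have f3: "R3 (\<Prod>i\<in>{..<r} - {j}. g i)"
    proof (rule R3_prod)
      fix i assume "i \<in> {..<r} - {j}"
      thus "R3 (g i)" unfolding g_def by (intro R3_power A) simp
    qed
    moreover have f4: "R3 (g j / 3)" unfolding calculation(2) by (intro R3_mult R3_power Aj A j(1))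
    ultimately show ?thesis unfolding f1 by (intro R3_mult f3 f4)
  qed
  have split: "sum T K = T k0 + sum T (K - {k0})" using fin k0K by (simp add: sum.remove)
  have "(3::rat)^(a*S) * odd_mhs_star n s / 3 = 1/3 + (\<Sum>k\<in>K - {k0}. (3::rat)^(a*S) * T k / 3)"
    unfolding osum split using Tk0 by (simp add: algebra_simps sum_distrib_left sum_distrib_right sum_divide_distrib)
  hence third: "1/3 = (3::rat)^(a*S) * odd_mhs_star n s / 3 - (\<Sum>k\<in>K - {k0}. (3::rat)^(a*S) * T k / 3)"
    by linarith
  have aS: "a*S \<ge> 1" using a1 S1 by simp
  have e3: "(3::rat)^(a*S) * odd_mhs_star n s / 3 = of_int (3^(a*S-1) * z)"
  proof -
    have "(3::rat)^(a*S) = 3^(a*S-1) * 3" using aS by (metis Suc_diff_1 less_le_trans zero_less_one power_Suc2)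
    thus ?thesis using z by simp
  qed
  have "R3 ((3::rat)^(a*S) * odd_mhs_star n s / 3)" unfolding e3 by (rule R3_int)
  hence "R3 (1/3)" unfolding third
    by (intro R3_diff R3_sum) (auto intro: rest)
  with not_R3_third show False by simp
qed

end
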